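(* Let $P:=\operatorname{conv}\{p_0,p_1,p_2\}$ such that $p_0,p_1,p_2 \in \mathbb{Z}^2$ are the only integer points in $P$. Let $Q:=\operatorname{conv}\{q_0,q_1,q_2\}$ be a triangle whose vertices are given by the barycentric coordinates with respect to $P$, that is, by a $3\times 3$-matrix $B$ such that \[ \begin{pmatrix} q_0^\top & 1 \\ q_1^\top & 1 \\ q_2^\top & 1 \end{pmatrix} = B \begin{pmatrix} p_0^\top & 1 \\ p_1^\top & 1 \\ p_2^\top & 1 \end{pmatrix}. \] Then \[ \operatorname{lw}(Q) = \min \{ \|D B z\|_\infty : z \in \mathbb{Z}^3 \text{ and the coordinates of } z \text{ are not all equal}\}, \] where \[ D:=\begin{pmatrix} -1 & 1 & 0 \\ 0 & -1 & 1 \\ 1 & 0 & -1 \end{pmatrix}. \] Furthermore, if $p_i=(1-x_i) q_{i+1} + x_i q_{i+2}$ for $i=0,1,2$ (indices modulo 3) with $0<x_i<1$ (that is, $Q$ is circumscribed about $P$), then \[ \operatorname{lw}(Q) = \frac{\min \{ \max_{i=0,1,2} |x_i y_i + (1-x_{i+1}) y_{i+1}| : y \in \mathbb{Z}^3 \setminus\{o\},\ y_0+y_1+y_2=0\}}{x_0x_1x_2 + (1-x_0)(1-x_1)(1-x_2)} \] and \[ \operatorname{area}(Q) = \frac{1}{2 (x_0x_1x_2 + (1-x_0)(1-x_1)(1-x_2))}. \]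
   Context: Vectors in $\mathbb{R}^2$ are column vectors, $^\top$ denotes transposition, $o$ the origin, and $\|\cdot\|_\infty$ the maximum norm. For a closed convex set $K\subseteq\mathbb{R}^2$ with non-empty interior, the width function is $w(K,u):=\max\{u^\top x : x\in K\}-\min\{u^\top x: x\in K\}$ for $u\in\mathbb{R}^2$, and the lattice width is $\operatorname{lw}(K):=\min\{w(K,u): u\in\mathbb{Z}^2\setminus\{o\}\}$. Sequences with 3 elements are indexed modulo 3. *)

theory Defs
  imports "HOL-Analysis.Analysis"
begin

definition int_vec :: "real^'n \<Rightarrow> bool" where
  "int_vec v \<longleftrightarrow> (\<forall>i. v $ i \<in> \<int>)"

definition width_fun :: "(real^2) set \<Rightarrow> real^2 \<Rightarrow> real" where
  "width_fun K u = (SUP x\<in>K. u \<bullet> x) - (INF x\<in>K. u \<bullet> x)"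

definition lattice_width :: "(real^2) set \<Rightarrow> real" where
  "lattice_width K = (INF u\<in>{u. int_vec u \<and> u \<noteq> 0}. width_fun K u)"

definition homrow :: "real^2 \<Rightarrow> real^3" where
  "homrow v = vector [v $ 1, v $ 2, 1]"

definition hommat :: "real^2 \<Rightarrow> real^2 \<Rightarrow> real^2 \<Rightarrow> real^3^3" where
  "hommat a b c = vector [homrow a, homrow b, homrow c]"

definition Dmat :: "real^3^3" where
  "Dmat = vector [vector [-1, 1, 0], vector [0, -1, 1], vector [1, 0, -1]]"

end

theory Submission
  imports Defs
begin


lemma hommat_mv: "hommat a b c *v w = vector [a$1*w$1 + a$2*w$2 + w$3, b$1*w$1 + b$2*w$2 + w$3, c$1*w$1 + c$2*w$2 + w$3]"
  unfolding hommat_def homrow_def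
  by (simp add: matrix_vector_mult_def vec_eq_iff forall_3 sum_3 algebra_simps)

lemma Dmat_mv: "Dmat *v (vector [a,b,c] :: real^3) = vector [b-a, c-b, a-c]"
  unfolding Dmat_def
  by (simp add: matrix_vector_mult_def vec_eq_iff forall_3 sum_3 algebra_simps)

lemma infnorm_3: "infnorm (vector [a,b,c] :: real^3) = max \<bar>a\<bar> (max \<bar>b\<bar> \<bar>c\<bar>)"
proof -
  have "{\<bar>(vector [a,b,c] :: real^3) $ i\<bar> |i. i \<in> UNIV} = {\<bar>a\<bar>, \<bar>b\<bar>, \<bar>c\<bar>}"
    unfolding UNIV_3 apply auto
      apply (rule exI[of _ 1], simp)
     apply (rule exI[of _ 2], simp)
    apply (rule exI[of _ 3], simp)
    done
  then show ?thesis unfolding infnorm_cart by (simp add: cSup_eq_Max max.assoc)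
qed

lemma det_hommat: "det (hommat a b c) = (b$1-a$1)*(c$2-a$2) - (c$1-a$1)*(b$2-a$2)"
  unfolding hommat_def homrow_def by (simp add: det_3 algebra_simps)

lemma measure_tri: "measure lebesgue (convex hull {A,B,C::real^2}) =
   \<bar>(C $ 1 - A $ 1) * (B $ 2 - A $ 2) - (B $ 1 - A $ 1) * (C $ 2 - A $ 2)\<bar> / 2"
proof -
  have "closed (convex hull {A,B,C})" by (simp add: compact_imp_closed finite_imp_compact_convex_hull)
  then have "measure lebesgue (convex hull {A,B,C}) = measure lborel (convex hull {A,B,C})"
    by (intro measure_completion) auto
  then show ?thesis using content_triangle by simp
qed



lemma lin0:
  fixes x y e f g h :: real
  assumes "x*e + y*g = 0" "x*f + y*h = 0" "e*h - g*f \<noteq> 0"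
  shows "x = 0 \<and> y = 0"
proof -
  have "x*(e*h - g*f) = h*(x*e + y*g) - g*(x*f + y*h)" by algebra
  hence 1: "x*(e*h - g*f) = 0" using assms by simp
  have "y*(e*h - g*f) = e*(x*f + y*h) - f*(x*e + y*g)" by algebra
  hence 2: "y*(e*h - g*f) = 0" using assms by simp
  show ?thesis using 1 2 assms(3) by simp
qed

lemma int_unit:
  fixes d k :: real
  assumes "d \<in> \<int>" "k \<in> \<int>" "d * k = 1"
  shows "\<bar>d\<bar> = 1"
proof -
  obtain D where D: "d = of_int D" using assms(1) Ints_cases by blast
  obtain K where K: "k = of_int K" using assms(2) Ints_cases by blast
  have "D * K = 1" using assms(3) D K by (metis of_int_eq_1_iff of_int_mult)
  hence "\<bar>D\<bar> = 1" using zmult_eq_1_iff by auto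
  thus ?thesis using D by simp
qed

lemma unimod:
  fixes a0 b0 a1 b1 a2 b2 :: real
  assumes ints: "a0 \<in> \<int>" "b0 \<in> \<int>" "a1 \<in> \<int>" "b1 \<in> \<int>" "a2 \<in> \<int>" "b2 \<in> \<int>"
    and d: "(a1-a0)*(b2-b0) - (a2-a0)*(b1-b0) \<noteq> 0"
    and empty: "\<And>s t. 0 \<le> s \<Longrightarrow> 0 \<le> t \<Longrightarrow> s + t \<le> 1 \<Longrightarrow>
       a0 + s*(a1-a0) + t*(a2-a0) \<in> \<int> \<Longrightarrow> b0 + s*(b1-b0) + t*(b2-b0) \<in> \<int> \<Longrightarrow>
       (s = 0 \<and> t = 0) \<or> (s = 1 \<and> t = 0) \<or> (s = 0 \<and> t = 1)"
  shows "\<bar>(a1-a0)*(b2-b0) - (a2-a0)*(b1-b0)\<bar> = 1"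
proof -
  define e where "e = a1 - a0"
  define f where "f = b1 - b0"
  define g where "g = a2 - a0"
  define h where "h = b2 - b0"
  define dd where "dd = e*h - g*f"
  have dd0: "dd \<noteq> 0" using d by (simp add: dd_def e_def f_def g_def h_def)
  have eI: "e \<in> \<int>" "f \<in> \<int>" "g \<in> \<int>" "h \<in> \<int>"
    using ints by (simp_all add: e_def f_def g_def h_def)
  have ddI: "dd \<in> \<int>" using eI by (simp add: dd_def)
  have step: "(m1*h - m2*g)/dd \<in> \<int> \<and> (e*m2 - f*m1)/dd \<in> \<int>"
    if mm: "m1 \<in> \<int>" "m2 \<in> \<int>" for m1 m2
  proof -
    define s where "s = (m1*h - m2*g)/dd"
    define t where "t = (e*m2 - f*m1)/dd"
    have sd: "s*dd = m1*h - m2*g" using dd0 by (simp add: s_def)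
    have td: "t*dd = e*m2 - f*m1" using dd0 by (simp add: t_def)
    have "(s*e + t*g)*dd = m1*dd" using sd td unfolding dd_def by algebra
    hence se: "s*e + t*g = m1" using dd0 by simp
    have "(s*f + t*h)*dd = m2*dd" using sd td unfolding dd_def by algebra
    hence sf: "s*f + t*h = m2" using dd0 by simp
    define s' where "s' = s - of_int \<lfloor>s\<rfloor>"
    define t' where "t' = t - of_int \<lfloor>t\<rfloor>"
    have s'b: "0 \<le> s'" "s' < 1" unfolding s'_def by linarith+
    have t'b: "0 \<le> t'" "t' < 1" unfolding t'_def by linarith+
    have A: "a0 + s'*e + t'*g \<in> \<int>"
    proof -
      have "a0 + s'*e + t'*g = a0 + m1 - of_int \<lfloor>s\<rfloor> * e - of_int \<lfloor>t\<rfloor> * g"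
        using se unfolding s'_def t'_def by (simp add: algebra_simps)
      then show ?thesis using ints mm eI by (metis Ints_diff Ints_add Ints_mult Ints_of_int)
    qed
    have Bb: "b0 + s'*f + t'*h \<in> \<int>"
    proof -
      have "b0 + s'*f + t'*h = b0 + m2 - of_int \<lfloor>s\<rfloor> * f - of_int \<lfloor>t\<rfloor> * h"
        using sf unfolding s'_def t'_def by (simp add: algebra_simps)
      then show ?thesis using ints mm eI by (metis Ints_diff Ints_add Ints_mult Ints_of_int)
    qed
    have "s' = 0 \<and> t' = 0"
    proof (cases "s' + t' \<le> 1")
      case True
      from empty[OF s'b(1) t'b(1) True] A Bb
      show ?thesis using s'b t'b by (auto simp: e_def f_def g_def h_def)
    next
      case False
      have A2: "a0 + (1-s')*e + (1-t')*g \<in> \<int>"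
      proof -
        have "a0 + (1-s')*e + (1-t')*g = (a0 + e + g) + a0 - (a0 + s'*e + t'*g)"
          by (simp add: algebra_simps)
        then show ?thesis using A ints eI by (metis Ints_diff Ints_add)
      qed
      have B2: "b0 + (1-s')*f + (1-t')*h \<in> \<int>"
      proof -
        have "b0 + (1-s')*f + (1-t')*h = (b0 + f + h) + b0 - (b0 + s'*f + t'*h)"
          by (simp add: algebra_simps)
        then show ?thesis using Bb ints eI by (metis Ints_diff Ints_add)
      qed
      have "0 \<le> 1 - s'" "0 \<le> 1 - t'" "(1-s') + (1-t') \<le> 1" using s'b t'b False by auto
      from empty[OF this] A2 B2 have
        "(1-s' = 0 \<and> 1-t' = 0) \<or> (1-s' = 1 \<and> 1-t' = 0) \<or> (1-s' = 0 \<and> 1-t' = 1)"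
        by (auto simp: e_def f_def g_def h_def)
      thus ?thesis using s'b t'b by auto
    qed
    hence "s \<in> \<int>" "t \<in> \<int>" unfolding s'_def t'_def by (auto simp: algebra_simps, metis Ints_of_int, metis Ints_of_int)
    thus ?thesis unfolding s_def t_def by simp
  qed
  have 1: "h/dd \<in> \<int>" "-f/dd \<in> \<int>" using step[of 1 0] by auto
  have 2: "-g/dd \<in> \<int>" "e/dd \<in> \<int>" using step[of 0 1] by auto
  have "(e/dd)*(h/dd) - (g/dd)*(f/dd) = (e*h - g*f)/(dd*dd)" by (simp add: diff_divide_distrib)
  also have "\<dots> = 1/dd" using dd0 by (simp add: dd_def[symmetric])
  finally have "dd * ((e/dd)*(h/dd) - (g/dd)*(f/dd)) = 1" using dd0 by simp
  moreover have "(e/dd)*(h/dd) - (g/dd)*(f/dd) \<in> \<int>"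
  proof -
    have "g/dd \<in> \<int>" using 2(1) by (metis Ints_minus minus_divide_left minus_minus)
    moreover have "f/dd \<in> \<int>" using 1(2) by (metis Ints_minus minus_divide_left minus_minus)
    ultimately show ?thesis using 1 2 by (metis Ints_diff Ints_mult)
  qed
  ultimately have "\<bar>dd\<bar> = 1" using int_unit ddI by blast
  thus ?thesis by (simp add: dd_def e_def f_def g_def h_def)
qed

lemma solve_int:
  fixes a0 b0 a1 b1 a2 b2 z0 z1 z2 :: real
  assumes "\<bar>(a1-a0)*(b2-b0) - (a2-a0)*(b1-b0)\<bar> = 1"
    and "z0 \<in> \<int>" "z1 \<in> \<int>" "z2 \<in> \<int>"
    and ints: "a0 \<in> \<int>" "b0 \<in> \<int>" "a1 \<in> \<int>" "b1 \<in> \<int>" "a2 \<in> \<int>" "b2 \<in> \<int>"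
  shows "\<exists>u1 u2 c. u1 \<in> \<int> \<and> u2 \<in> \<int> \<and> c \<in> \<int> \<and>
     z0 = u1*a0 + u2*b0 + c \<and> z1 = u1*a1 + u2*b1 + c \<and> z2 = u1*a2 + u2*b2 + c"
proof -
  define e where "e = a1 - a0"
  define f where "f = b1 - b0"
  define g where "g = a2 - a0"
  define h where "h = b2 - b0"
  define dd where "dd = e*h - g*f"
  have dd: "dd = 1 \<or> dd = -1" using assms(1) by (auto simp: dd_def e_def f_def g_def h_def abs_if split: if_splits)
  define u1 where "u1 = ((z1-z0)*h - (z2-z0)*f)*dd"
  define u2 where "u2 = (e*(z2-z0) - g*(z1-z0))*dd"
  define c where "c = z0 - u1*a0 - u2*b0"
  have eI: "e \<in> \<int>" "f \<in> \<int>" "g \<in> \<int>" "h \<in> \<int>"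
    using ints by (simp_all add: e_def f_def g_def h_def)
  have u1I: "u1 \<in> \<int>" using dd eI assms(2-4) unfolding u1_def by auto
  have u2I: "u2 \<in> \<int>" using dd eI assms(2-4) unfolding u2_def by auto
  have cI: "c \<in> \<int>" using u1I u2I ints assms(2) unfolding c_def by simp
  have dd0: "dd \<noteq> 0" using dd by auto
  have dd2: "dd*dd = 1" using dd by auto
  have "u1*e + u2*f = (z1 - z0)*(dd*dd)" unfolding u1_def u2_def dd_def by algebra
  hence E1: "u1*e + u2*f = z1 - z0" using dd2 by simp
  have "u1*g + u2*h = (z2 - z0)*(dd*dd)" unfolding u1_def u2_def dd_def by algebra
  hence E2: "u1*g + u2*h = z2 - z0" using dd2 by simp
  show ?thesis
    apply (rule exI[of _ u1], rule exI[of _ u2], rule exI[of _ c])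
    using u1I u2I cI E1 E2 unfolding c_def e_def f_def g_def h_def by (auto simp: algebra_simps)
qed



lemma inner2: "u \<bullet> (v::real^2) = u$1 * v$1 + u$2 * v$2"
  by (simp add: inner_vec_def sum_2)

lemma int_vec2: "int_vec (v::real^2) \<longleftrightarrow> v$1 \<in> \<int> \<and> v$2 \<in> \<int>"
  by (simp add: int_vec_def forall_2)

lemma int_vec3: "int_vec (v::real^3) \<longleftrightarrow> v$1 \<in> \<int> \<and> v$2 \<in> \<int> \<and> v$3 \<in> \<int>"
  by (simp add: int_vec_def forall_3)

lemma vec2_eta: "(vector [u$1, u$2] :: real^2) = u"
  by (simp add: vec_eq_iff forall_2)

lemma maxmin3: "max a (max b c) - min a (min b c) = max \<bar>b-a\<bar> (max \<bar>c-b\<bar> \<bar>a-(c::real)\<bar>)"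
  by (cases "a \<le> b"; cases "b \<le> c"; cases "a \<le> c") (simp_all add: max_def min_def abs_if)

lemma width_tri:
  fixes q0 q1 q2 u :: "real^2"
  shows "width_fun (convex hull {q0,q1,q2}) u =
    max \<bar>u\<bullet>q1 - u\<bullet>q0\<bar> (max \<bar>u\<bullet>q2 - u\<bullet>q1\<bar> \<bar>u\<bullet>q0 - u\<bullet>q2\<bar>)"
proof -
  define K where "K = convex hull {q0,q1,q2}"
  define M where "M = max (u\<bullet>q0) (max (u\<bullet>q1) (u\<bullet>q2))"
  define m where "m = min (u\<bullet>q0) (min (u\<bullet>q1) (u\<bullet>q2))"
  have bnd: "m \<le> u\<bullet>x \<and> u\<bullet>x \<le> M" if "x \<in> K" for x
  proof -
    have "\<exists>a b c. x = a *\<^sub>R q0 + b *\<^sub>R q1 + c *\<^sub>R q2 \<and> 0 \<le> a \<and> 0 \<le> b \<and> 0 \<le> c \<and> a+b+c = 1"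
      using that unfolding K_def convex_hull_3 by simp
    then obtain a b c where abc: "0 \<le> a" "0 \<le> b" "0 \<le> c" "a+b+c = 1"
      and x: "x = a *\<^sub>R q0 + b *\<^sub>R q1 + c *\<^sub>R q2" by auto
    have ux: "u\<bullet>x = a*(u\<bullet>q0) + b*(u\<bullet>q1) + c*(u\<bullet>q2)"
      by (simp add: x inner_add_right)
    have "a*(u\<bullet>q0) \<le> a*M" "b*(u\<bullet>q1) \<le> b*M" "c*(u\<bullet>q2) \<le> c*M"
      using abc by (auto intro!: mult_left_mono simp: M_def)
    moreover have "a*m \<le> a*(u\<bullet>q0)" "b*m \<le> b*(u\<bullet>q1)" "c*m \<le> c*(u\<bullet>q2)"
      using abc by (auto intro!: mult_left_mono simp: m_def)
    moreover have "a*M + b*M + c*M = (a+b+c)*M" "a*m + b*m + c*m = (a+b+c)*m"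
      by (simp_all add: distrib_right)
    moreover have "(a+b+c)*M = M" "(a+b+c)*m = m" using abc(4) by simp_all
    ultimately show ?thesis unfolding ux by linarith
  qed
  have inK: "q0 \<in> K" "q1 \<in> K" "q2 \<in> K" unfolding K_def by (auto intro: hull_inc)
  have "M \<in> (\<lambda>x. u\<bullet>x) ` K"
  proof -
    have "M = u\<bullet>q0 \<or> M = u\<bullet>q1 \<or> M = u\<bullet>q2" unfolding M_def max_def by auto
    thus ?thesis using inK by blast
  qed
  hence S: "(SUP x\<in>K. u\<bullet>x) = M"
    by (intro cSup_eq_maximum) (auto dest: bnd)
  have "m \<in> (\<lambda>x. u\<bullet>x) ` K"
  proof -
    have "m = u\<bullet>q0 \<or> m = u\<bullet>q1 \<or> m = u\<bullet>q2" unfolding m_def min_def by auto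
    thus ?thesis using inK by blast
  qed
  hence I: "(INF x\<in>K. u\<bullet>x) = m"
    by (intro cInf_eq_minimum) (auto dest: bnd)
  show ?thesis unfolding width_fun_def K_def[symmetric] S I M_def m_def
    by (rule maxmin3)
qed

lemma det0_collinear:
  assumes "det (hommat a b c) = 0"
  shows "collinear {a,b,c}"
proof -
  have eq: "(a$1-c$1)*(b$2-c$2) = (a$2-c$2)*(b$1-c$1)"
    using assms unfolding det_hommat by algebra
  show ?thesis
  proof (cases "a = c")
    case True thus ?thesis by (simp add: collinear_3_expand)
  next
    case False
    show ?thesis
    proof (cases "a$1 = c$1")
      case False
      define u where "u = (b$1-c$1)/(a$1-c$1)"
      have u1: "u*(a$1-c$1) = b$1-c$1" using False by (simp add: u_def)
      have "u*(a$2-c$2)*(a$1-c$1) = (b$2-c$2)*(a$1-c$1)" using u1 eq by algebra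
      hence u2: "u*(a$2-c$2) = b$2-c$2" using False by simp
      have c1: "b$1 = u*a$1 + (1-u)*c$1" "b$2 = u*a$2 + (1-u)*c$2"
        using u1 u2 by (simp_all add: algebra_simps)
      have "b = u *\<^sub>R a + (1-u) *\<^sub>R c"
        using c1 by (simp add: vec_eq_iff forall_2)
      thus ?thesis by (auto simp: collinear_3_expand)
    next
      case True
      with \<open>a \<noteq> c\<close> have ne: "a$2 \<noteq> c$2" by (auto simp: vec_eq_iff forall_2)
      define u where "u = (b$2-c$2)/(a$2-c$2)"
      have u2: "u*(a$2-c$2) = b$2-c$2" using ne by (simp add: u_def)
      have "u*(a$1-c$1)*(a$2-c$2) = (b$1-c$1)*(a$2-c$2)" using u2 eq by algebra
      hence u1: "u*(a$1-c$1) = b$1-c$1" using ne by simp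
      have c1: "b$1 = u*a$1 + (1-u)*c$1" "b$2 = u*a$2 + (1-u)*c$2"
        using u1 u2 by (simp_all add: algebra_simps)
      have "b = u *\<^sub>R a + (1-u) *\<^sub>R c"
        using c1 by (simp add: vec_eq_iff forall_2)
      thus ?thesis by (auto simp: collinear_3_expand)
    qed
  qed
qed

lemma empty_st:
  fixes p0 p1 p2 :: "real^2"
  assumes P: "{z. int_vec z} \<inter> convex hull {p0, p1, p2} = {p0, p1, p2}"
    and d: "(p1$1-p0$1)*(p2$2-p0$2) - (p2$1-p0$1)*(p1$2-p0$2) \<noteq> 0"
    and st: "0 \<le> s" "0 \<le> t" "s + t \<le> 1"
    and i1: "p0$1 + s*(p1$1-p0$1) + t*(p2$1-p0$1) \<in> \<int>"
    and i2: "p0$2 + s*(p1$2-p0$2) + t*(p2$2-p0$2) \<in> \<int>"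
  shows "(s = 0 \<and> t = 0) \<or> (s = 1 \<and> t = 0) \<or> (s = 0 \<and> t = 1)"
proof -
  define X where "X = (1-s-t) *\<^sub>R p0 + s *\<^sub>R p1 + t *\<^sub>R p2"
  have X1: "X$1 = p0$1 + s*(p1$1-p0$1) + t*(p2$1-p0$1)" by (simp add: X_def algebra_simps)
  have X2: "X$2 = p0$2 + s*(p1$2-p0$2) + t*(p2$2-p0$2)" by (simp add: X_def algebra_simps)
  have "X \<in> convex hull {p0,p1,p2}" unfolding convex_hull_3 X_def using st
    by (intro CollectI exI[of _ "1-s-t"] exI[of _ s] exI[of _ t]) auto
  moreover have "int_vec X" unfolding int_vec2 X1 X2 using i1 i2 by simp
  ultimately have "X \<in> {p0,p1,p2}" using P by blast
  then consider "X = p0" | "X = p1" | "X = p2" by blast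
  thus ?thesis
  proof cases
    case 1
    hence "X$1 = p0$1" "X$2 = p0$2" by simp_all
    hence "s*(p1$1-p0$1) + t*(p2$1-p0$1) = 0" "s*(p1$2-p0$2) + t*(p2$2-p0$2) = 0"
      unfolding X1 X2 by simp_all
    from lin0[OF this d] show ?thesis by simp
  next
    case 2
    hence "X$1 = p1$1" "X$2 = p1$2" by simp_all
    hence "(s-1)*(p1$1-p0$1) + t*(p2$1-p0$1) = 0" "(s-1)*(p1$2-p0$2) + t*(p2$2-p0$2) = 0"
      unfolding X1 X2 by (simp_all add: algebra_simps)
    from lin0[OF this d] show ?thesis by simp
  next
    case 3
    hence "X$1 = p2$1" "X$2 = p2$2" by simp_all
    hence "s*(p1$1-p0$1) + (t-1)*(p2$1-p0$1) = 0" "s*(p1$2-p0$2) + (t-1)*(p2$2-p0$2) = 0"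
      unfolding X1 X2 by (simp_all add: algebra_simps)
    from lin0[OF this d] show ?thesis by simp
  qed
qed

lemma Inf_scale:
  fixes S :: "real set"
  assumes "c > 0" "S \<noteq> {}" "\<forall>x\<in>S. 0 \<le> x"
  shows "Inf ((\<lambda>x. c*x) ` S) = c * Inf S"
proof (rule antisym)
  have bS: "bdd_below S" using assms(3) by (auto intro: bdd_belowI)
  have bcS: "bdd_below ((\<lambda>x. c*x) ` S)" using assms by (auto intro!: bdd_belowI[of _ 0])
  have "Inf ((\<lambda>x. c*x) ` S) / c \<le> Inf S"
  proof (rule cInf_greatest[OF assms(2)])
    fix x assume "x \<in> S"
    hence "Inf ((\<lambda>x. c*x) ` S) \<le> c*x" by (intro cInf_lower[OF _ bcS]) auto
    thus "Inf ((\<lambda>x. c*x) ` S) / c \<le> x" using assms(1) by (simp add: field_simps)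
  qed
  thus "Inf ((\<lambda>x. c*x) ` S) \<le> c * Inf S" using assms(1) by (simp add: field_simps)
  show "c * Inf S \<le> Inf ((\<lambda>x. c*x) ` S)"
  proof (rule cInf_greatest)
    show "(\<lambda>x. c*x) ` S \<noteq> {}" using assms by simp
    fix y assume "y \<in> (\<lambda>x. c*x) ` S"
    then obtain x where "x \<in> S" "y = c*x" by blast
    thus "c * Inf S \<le> y" using assms(1) cInf_lower[OF _ bS] by (simp add: mult_left_mono)
  qed
qed



theorem lemma12:
  fixes p0 p1 p2 q0 q1 q2 :: "real^2" and B :: "real^3^3"
  assumes P_empty: "{z. int_vec z} \<inter> convex hull {p0, p1, p2} = {p0, p1, p2}"
    and Q_triangle: "\<not> collinear {q0, q1, q2}"
    and bary: "hommat q0 q1 q2 = B ** hommat p0 p1 p2"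
  shows "lattice_width (convex hull {q0, q1, q2}) =
           (INF z\<in>{z::real^3. int_vec z \<and> \<not> (z $ 1 = z $ 2 \<and> z $ 2 = z $ 3)}.
              infnorm (Dmat *v (B *v z)))
       \<and> (\<forall>x0 x1 x2 :: real.
            p0 = (1 - x0) *\<^sub>R q1 + x0 *\<^sub>R q2 \<and>
            p1 = (1 - x1) *\<^sub>R q2 + x1 *\<^sub>R q0 \<and>
            p2 = (1 - x2) *\<^sub>R q0 + x2 *\<^sub>R q1 \<and>
            0 < x0 \<and> x0 < 1 \<and> 0 < x1 \<and> x1 < 1 \<and> 0 < x2 \<and> x2 < 1
          \<longrightarrow>
            lattice_width (convex hull {q0, q1, q2}) =
              Inf {max \<bar>x0 * of_int y0 + (1 - x1) * of_int y1\<bar>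
                      (max \<bar>x1 * of_int y1 + (1 - x2) * of_int y2\<bar>
                           \<bar>x2 * of_int y2 + (1 - x0) * of_int y0\<bar>)
                   | y0 y1 y2 :: int. (y0, y1, y2) \<noteq> (0, 0, 0) \<and> y0 + y1 + y2 = 0}
              / (x0 * x1 * x2 + (1 - x0) * (1 - x1) * (1 - x2))
          \<and> measure lebesgue (convex hull {q0, q1, q2}) =
              1 / (2 * (x0 * x1 * x2 + (1 - x0) * (1 - x1) * (1 - x2))))"
proof -
  define W where "W = (\<lambda>u::real^2. max \<bar>u\<bullet>q1 - u\<bullet>q0\<bar> (max \<bar>u\<bullet>q2 - u\<bullet>q1\<bar> \<bar>u\<bullet>q0 - u\<bullet>q2\<bar>))"
  define U where "U = {u::real^2. int_vec u \<and> u \<noteq> 0}"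
  have LW: "lattice_width (convex hull {q0, q1, q2}) = Inf (W ` U)"
    unfolding lattice_width_def width_tri W_def U_def by simp
  have "p0 \<in> {z. int_vec z} \<inter> convex hull {p0, p1, p2}"
       "p1 \<in> {z. int_vec z} \<inter> convex hull {p0, p1, p2}"
       "p2 \<in> {z. int_vec z} \<inter> convex hull {p0, p1, p2}"
    unfolding P_empty by simp_all
  hence "int_vec p0" "int_vec p1" "int_vec p2" by simp_all
  hence pI: "p0$1 \<in> \<int>" "p0$2 \<in> \<int>" "p1$1 \<in> \<int>" "p1$2 \<in> \<int>" "p2$1 \<in> \<int>" "p2$2 \<in> \<int>"
    by (simp_all add: int_vec2)
  define dP where "dP = (p1$1-p0$1)*(p2$2-p0$2) - (p2$1-p0$1)*(p1$2-p0$2)"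
  have detP: "det (hommat p0 p1 p2) = dP" by (simp add: det_hommat dP_def)
  have "det (hommat q0 q1 q2) \<noteq> 0" using Q_triangle det0_collinear by blast
  hence dP0: "dP \<noteq> 0" using bary det_mul detP by (metis mult_zero_right)
  have absd: "\<bar>(p1$1-p0$1)*(p2$2-p0$2) - (p2$1-p0$1)*(p1$2-p0$2)\<bar> = 1"
    using unimod[OF pI] dP0 empty_st[OF P_empty] unfolding dP_def by blast
  have solv: "\<exists>u1 u2 c. u1 \<in> \<int> \<and> u2 \<in> \<int> \<and> c \<in> \<int> \<and>
     z0 = u1*p0$1 + u2*p0$2 + c \<and> z1 = u1*p1$1 + u2*p1$2 + c \<and> z2 = u1*p2$1 + u2*p2$2 + c"
    if "z0 \<in> \<int>" "z1 \<in> \<int>" "z2 \<in> \<int>" for z0 z1 z2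
    using solve_int[OF absd that pI] .
  have U_nc: "\<not> (u\<bullet>p0 = u\<bullet>p1 \<and> u\<bullet>p1 = u\<bullet>p2)" if "u \<in> U" for u
  proof
    assume h: "u\<bullet>p0 = u\<bullet>p1 \<and> u\<bullet>p1 = u\<bullet>p2"
    have "u$1*(p1$1-p0$1) + u$2*(p1$2-p0$2) = 0" "u$1*(p2$1-p0$1) + u$2*(p2$2-p0$2) = 0"
      using h unfolding inner2 by (simp_all add: algebra_simps)
    moreover have "(p1$1-p0$1)*(p2$2-p0$2) - (p1$2-p0$2)*(p2$1-p0$1) \<noteq> 0"
      using dP0 unfolding dP_def by (simp add: algebra_simps)
    ultimately have "u$1 = 0 \<and> u$2 = 0" by (rule lin0)
    hence "u = 0" by (simp add: vec_eq_iff forall_2)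
    thus False using that unfolding U_def by simp
  qed
  have uI: "u\<bullet>p0 \<in> \<int>" "u\<bullet>p1 \<in> \<int>" "u\<bullet>p2 \<in> \<int>" if "u \<in> U" for u
    using that pI unfolding U_def int_vec2 inner2 by auto
  have Wnn: "0 \<le> W u" for u unfolding W_def by simp
  have Une: "U \<noteq> {}"
  proof -
    have "(vector [1, 0] :: real^2) \<in> U" unfolding U_def int_vec2 by (auto simp: vec_eq_iff forall_2)
    thus ?thesis by blast
  qed

  define g where "g = (\<lambda>z. infnorm (Dmat *v (B *v z)))"
  define Z where "Z = {z::real^3. int_vec z \<and> \<not> (z $ 1 = z $ 2 \<and> z $ 2 = z $ 3)}"
  have G: "g (hommat p0 p1 p2 *v w) = W (vector [w$1, w$2])" for w
  proof -
    have "B *v (hommat p0 p1 p2 *v w) = hommat q0 q1 q2 *v w"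
      by (simp add: matrix_vector_mul_assoc bary)
    hence "g (hommat p0 p1 p2 *v w) = infnorm (Dmat *v (hommat q0 q1 q2 *v w))"
      unfolding g_def by simp
    thus ?thesis unfolding W_def hommat_mv Dmat_mv infnorm_3
      by (simp add: inner2 algebra_simps)
  qed
  have "W ` U = g ` Z"
  proof
    show "W ` U \<subseteq> g ` Z"
    proof
      fix v assume "v \<in> W ` U"
      then obtain u where u: "u \<in> U" "v = W u" by blast
      define w where "w = (vector [u$1, u$2, 0] :: real^3)"
      have z: "hommat p0 p1 p2 *v w = vector [u\<bullet>p0, u\<bullet>p1, u\<bullet>p2]"
        by (simp add: w_def hommat_mv inner2 algebra_simps)
      have "hommat p0 p1 p2 *v w \<in> Z" unfolding z Z_def int_vec3 using uI[OF u(1)] U_nc[OF u(1)] by auto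
      moreover have "v = g (hommat p0 p1 p2 *v w)" using G[of w] u by (simp add: w_def vec2_eta)
      ultimately show "v \<in> g ` Z" by blast
    qed
    show "g ` Z \<subseteq> W ` U"
    proof
      fix v assume "v \<in> g ` Z"
      then obtain z where z: "z \<in> Z" "v = g z" by blast
      hence zI: "z$1 \<in> \<int>" "z$2 \<in> \<int>" "z$3 \<in> \<int>" and nc: "\<not> (z $ 1 = z $ 2 \<and> z $ 2 = z $ 3)"
        unfolding Z_def int_vec3 by auto
      obtain u1 u2 c where uc: "u1 \<in> \<int>" "u2 \<in> \<int>" "c \<in> \<int>"
        "z$1 = u1*p0$1 + u2*p0$2 + c" "z$2 = u1*p1$1 + u2*p1$2 + c" "z$3 = u1*p2$1 + u2*p2$2 + c"
        using solv[OF zI] by blast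
      define w where "w = (vector [u1, u2, c] :: real^3)"
      have zw: "z = hommat p0 p1 p2 *v w"
        using uc(4-6) by (simp add: w_def hommat_mv vec_eq_iff forall_3 algebra_simps)
      define u where "u = (vector [u1, u2] :: real^2)"
      have "u \<noteq> 0"
      proof
        assume "u = 0"
        hence "u1 = 0" "u2 = 0" unfolding u_def by (simp_all add: vec_eq_iff forall_2)
        thus False using nc uc(4-6) by simp
      qed
      hence "u \<in> U" unfolding U_def u_def int_vec2 using uc by simp
      moreover have "v = W u" using z(2) zw G[of w] by (simp add: w_def u_def)
      ultimately show "v \<in> W ` U" by blast
    qed
  qed
  hence partA: "lattice_width (convex hull {q0, q1, q2}) = (INF z\<in>Z. g z)" using LW by simp

  have partB: "lattice_width (convex hull {q0, q1, q2}) =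
              Inf {max \<bar>x0 * of_int y0 + (1 - x1) * of_int y1\<bar>
                      (max \<bar>x1 * of_int y1 + (1 - x2) * of_int y2\<bar>
                           \<bar>x2 * of_int y2 + (1 - x0) * of_int y0\<bar>)
                   | y0 y1 y2 :: int. (y0, y1, y2) \<noteq> (0, 0, 0) \<and> y0 + y1 + y2 = 0}
              / (x0 * x1 * x2 + (1 - x0) * (1 - x1) * (1 - x2))
          \<and> measure lebesgue (convex hull {q0, q1, q2}) =
              1 / (2 * (x0 * x1 * x2 + (1 - x0) * (1 - x1) * (1 - x2)))"
    if H: "p0 = (1 - x0) *\<^sub>R q1 + x0 *\<^sub>R q2" "p1 = (1 - x1) *\<^sub>R q2 + x1 *\<^sub>R q0"
          "p2 = (1 - x2) *\<^sub>R q0 + x2 *\<^sub>R q1"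
      and xb: "0 < x0" "x0 < 1" "0 < x1" "x1 < 1" "0 < x2" "x2 < 1" for x0 x1 x2
  proof -
    define X where "X = x0 * x1 * x2 + (1 - x0) * (1 - x1) * (1 - x2)"
    have "0 < x0 * x1 * x2" using xb by simp
    moreover have "0 \<le> (1 - x0) * (1 - x1) * (1 - x2)" using xb by simp
    ultimately have Xpos: "X > 0" unfolding X_def by linarith
    have val: "max \<bar>x0 * y0 + (1 - x1) * y1\<bar> (max \<bar>x1 * y1 + (1 - x2) * y2\<bar> \<bar>x2 * y2 + (1 - x0) * y0\<bar>)
        = X * W u"
      if y: "y0 = u\<bullet>p1 - u\<bullet>p2" "y1 = u\<bullet>p2 - u\<bullet>p0" "y2 = u\<bullet>p0 - u\<bullet>p1" for u y0 y1 y2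
    proof -
      have ip: "u\<bullet>p0 = (1-x0)*(u\<bullet>q1) + x0*(u\<bullet>q2)" "u\<bullet>p1 = (1-x1)*(u\<bullet>q2) + x1*(u\<bullet>q0)"
        "u\<bullet>p2 = (1-x2)*(u\<bullet>q0) + x2*(u\<bullet>q1)"
        using H by (simp_all add: inner_add_right)
      have e0: "x0 * y0 + (1 - x1) * y1 = X * (u\<bullet>q0 - u\<bullet>q1)"
        unfolding y ip X_def by algebra
      have e1: "x1 * y1 + (1 - x2) * y2 = X * (u\<bullet>q1 - u\<bullet>q2)"
        unfolding y ip X_def by algebra
      have e2: "x2 * y2 + (1 - x0) * y0 = X * (u\<bullet>q2 - u\<bullet>q0)"
        unfolding y ip X_def by algebra
      have a: "\<bar>X * (u\<bullet>q0 - u\<bullet>q1)\<bar> = X * \<bar>u\<bullet>q1 - u\<bullet>q0\<bar>"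
        "\<bar>X * (u\<bullet>q1 - u\<bullet>q2)\<bar> = X * \<bar>u\<bullet>q2 - u\<bullet>q1\<bar>"
        "\<bar>X * (u\<bullet>q2 - u\<bullet>q0)\<bar> = X * \<bar>u\<bullet>q0 - u\<bullet>q2\<bar>"
        using Xpos by (simp_all add: abs_mult abs_minus_commute)
      show ?thesis unfolding e0 e1 e2 a W_def using Xpos by (simp add: max_mult_distrib_left)
    qed
    define T where "T = {max \<bar>x0 * of_int y0 + (1 - x1) * of_int y1\<bar>
                      (max \<bar>x1 * of_int y1 + (1 - x2) * of_int y2\<bar>
                           \<bar>x2 * of_int y2 + (1 - x0) * of_int y0\<bar>)
                   | y0 y1 y2 :: int. (y0, y1, y2) \<noteq> (0, 0, 0) \<and> y0 + y1 + y2 = 0}"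
    have "T = (\<lambda>u. X * W u) ` U"
    proof
      show "T \<subseteq> (\<lambda>u. X * W u) ` U"
      proof
        fix t assume "t \<in> T"
        then obtain Y0 Y1 Y2 :: int where Y: "(Y0, Y1, Y2) \<noteq> (0, 0, 0)" "Y0 + Y1 + Y2 = 0"
          and t: "t = max \<bar>x0 * of_int Y0 + (1 - x1) * of_int Y1\<bar>
                      (max \<bar>x1 * of_int Y1 + (1 - x2) * of_int Y2\<bar>
                           \<bar>x2 * of_int Y2 + (1 - x0) * of_int Y0\<bar>)"
          unfolding T_def by blast
        have Yr: "real_of_int Y0 + of_int Y1 + of_int Y2 = 0" using Y(2) by (metis of_int_add of_int_0)
        obtain u1 u2 c where uc: "u1 \<in> \<int>" "u2 \<in> \<int>" "c \<in> \<int>"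
          "0 = u1*p0$1 + u2*p0$2 + c" "- of_int Y2 = u1*p1$1 + u2*p1$2 + c"
          "of_int Y1 = u1*p2$1 + u2*p2$2 + c"
          using solv[of 0 "- of_int Y2" "of_int Y1"] by auto
        define u where "u = (vector [u1, u2] :: real^2)"
        have ip: "u\<bullet>p0 = - c" "u\<bullet>p1 = - of_int Y2 - c" "u\<bullet>p2 = of_int Y1 - c"
          using uc(4-6) unfolding u_def inner2 by (simp_all add: algebra_simps)
        have "u \<noteq> 0"
        proof
          assume "u = 0"
          hence "u1 = 0" "u2 = 0" unfolding u_def by (simp_all add: vec_eq_iff forall_2)
          hence "Y1 = 0" "Y2 = 0" using uc(4-6) by simp_all
          thus False using Y by simp
        qed
        hence uU: "u \<in> U" unfolding U_def u_def int_vec2 using uc by simp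
        have "t = X * W u" unfolding t
          by (rule val) (use Yr ip in \<open>simp_all add: algebra_simps\<close>)
        thus "t \<in> (\<lambda>u. X * W u) ` U" using uU by blast
      qed
      show "(\<lambda>u. X * W u) ` U \<subseteq> T"
      proof
        fix t assume "t \<in> (\<lambda>u. X * W u) ` U"
        then obtain u where u: "u \<in> U" "t = X * W u" by blast
        obtain Y0 where Y0: "u\<bullet>p1 - u\<bullet>p2 = of_int Y0" using uI[OF u(1)] by (metis Ints_diff Ints_cases)
        obtain Y1 where Y1: "u\<bullet>p2 - u\<bullet>p0 = of_int Y1" using uI[OF u(1)] by (metis Ints_diff Ints_cases)
        obtain Y2 where Y2: "u\<bullet>p0 - u\<bullet>p1 = of_int Y2" using uI[OF u(1)] by (metis Ints_diff Ints_cases)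
        have "real_of_int (Y0 + Y1 + Y2) = 0" using Y0 Y1 Y2 by simp
        hence s: "Y0 + Y1 + Y2 = 0" by linarith
        have nz: "(Y0, Y1, Y2) \<noteq> (0, 0, 0)"
        proof
          assume "(Y0, Y1, Y2) = (0, 0, 0)"
          hence "u\<bullet>p0 = u\<bullet>p1 \<and> u\<bullet>p1 = u\<bullet>p2" using Y0 Y1 Y2 by simp
          thus False using U_nc[OF u(1)] by simp
        qed
        have "t = max \<bar>x0 * of_int Y0 + (1 - x1) * of_int Y1\<bar>
                      (max \<bar>x1 * of_int Y1 + (1 - x2) * of_int Y2\<bar>
                           \<bar>x2 * of_int Y2 + (1 - x0) * of_int Y0\<bar>)"
          unfolding u(2) by (rule val[symmetric]) (use Y0 Y1 Y2 in simp_all)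
        thus "t \<in> T" unfolding T_def using s nz by blast
      qed
    qed
    hence "Inf T = X * Inf (W ` U)"
      using Inf_scale[OF Xpos, of "W ` U"] Une Wnn by (simp add: image_image)
    hence lwB: "lattice_width (convex hull {q0, q1, q2}) = Inf T / X"
      using LW Xpos by simp
    define dQ where "dQ = (q1$1-q0$1)*(q2$2-q0$2) - (q2$1-q0$1)*(q1$2-q0$2)"
    have pc: "p0$1 = (1-x0)*q1$1 + x0*q2$1" "p0$2 = (1-x0)*q1$2 + x0*q2$2"
      "p1$1 = (1-x1)*q2$1 + x1*q0$1" "p1$2 = (1-x1)*q2$2 + x1*q0$2"
      "p2$1 = (1-x2)*q0$1 + x2*q1$1" "p2$2 = (1-x2)*q0$2 + x2*q1$2"
      using H by simp_all
    have "(p1$1-p0$1)*(p2$2-p0$2) - (p2$1-p0$1)*(p1$2-p0$2) = X * dQ"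
      unfolding pc X_def dQ_def by algebra
    hence "X * \<bar>dQ\<bar> = 1" using absd Xpos by (simp add: abs_mult)
    hence dQ: "\<bar>dQ\<bar> = 1 / X" using Xpos by (simp add: field_simps)
    have "measure lebesgue (convex hull {q0, q1, q2}) = \<bar>dQ\<bar> / 2"
      unfolding measure_tri dQ_def by (simp add: abs_minus_commute algebra_simps)
    also have "\<dots> = 1 / (2 * X)" using dQ by simp
    finally show ?thesis using lwB unfolding T_def X_def by simp
  qed
  show ?thesis using partA partB unfolding g_def Z_def by blast
qed


end
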